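(* Suppose the strong recursive skeletonization factorization (RS-S) described in the context is computed for $K\in\mathbb{C}^{N\times N}$ using a tree with $L=O(\log N)$ levels in $d$ dimensions such that each leaf box contains at most a constant number (independent of $N$) of DOFs, and that a constant number $n_p$ (independent of $N$) of proxy points is used to discretize each proxy surface. Let $k_\ell$ be the maximum of $|\mathcal{S}_i|$ over all boxes $i$ at level $\ell$, and assume $k_\ell\le k_{\ell+1}$ for all $\ell$. Then the cost $t_f$ of constructing the factorization $F$ and the cost $t_s$ of applying $F$ or $F^{-1}$ to a vector satisfy $$t_f=O(N)+\sum_{\ell=1}^{L-2}O\big(2^{d(L-\ell)}k_\ell^3\big),\qquad t_s=O(N)+\sum_{\ell=1}^{L-2}O\big(2^{d(L-\ell)}k_\ell^2\big),$$ and the memory required to store $F$ is $m_f=O(t_s)$.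
   Context: Let $K\in\mathbb{C}^{N\times N}$ have rows and columns indexed by $[N]$; each index (a "DOF") is associated with a point $x_i\in\mathbb{R}^d$, $d\in\{2,3\}$; $K_{ij}$ for distinct points is given by kernel evaluations $K(x_i-x_j)$ (up to scaling) for a kernel satisfying a Green's-identity (single-layer) representation, e.g. the Laplace kernel. A quadtree/octree decomposition with levels $\ell=1$ (finest) to $L$ (root) is given, with at most $2^{d(L-\ell)}$ boxes at level $\ell$; boxes are processed in a bottom-up level-by-level order, levels $1,\dots,L-2$. For box $i$ at level $\ell$: $\mathcal{B}_i$ = currently active DOFs in the box (for $\ell>1$, the union of the skeleton sets of its children), $\mathcal{N}_i$ = active DOFs in adjacent same-level boxes, $\mathcal{F}_i$ = remaining active DOFs; $\mathcal{O}_i\subseteq\mathcal{F}_i$ are those lying in same-level boxes not entirely outside the circle/sphere $\Gamma$ of radius $\tfrac52$ times the box sidelength centred at the box centre. An interpolative decomposition (ID) partitions $\mathcal{B}_i=\mathcal{R}_i\cup\mathcal{S}_i$ with interpolation matrix $T$; it is computed from the matrix stacking $A_{\mathcal{O}_i\mathcal{B}_i}$, $A_{\mathcal{B}_i\mathcal{O}_i}^*$ and the $n_p\times|\mathcal{B}_i|$ matrices of kernel interactions between $n_p$ proxy points on $\Gamma$ and $\mathcal{B}_i$ (both orientations), at cost $O(mn^2)$ for an $m\times n$ matrix. Strong skeletonization then applies block row/column operations with the unit-triangular matrices built from $T$ (eliminating $\mathcal{R}_i$ against $\mathcal{S}_i$ in the far field) and a block Gaussian elimination of $\mathcal{R}_i$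 against $\mathcal{S}_i\cup\mathcal{N}_i$ (Schur complement update, cost $O(|\mathcal{I}|^3+|\mathcal{I}||\mathcal{J}|^2)$ for pivot set $\mathcal{I}$ and updated set $\mathcal{J}$); the DOFs in $\mathcal{R}_i$ become decoupled (inactive). The result is $F=\big(\prod_i V_i\big)P_tDP_t^*\big(\prod_i W_i\big)\approx K$, where each $V_i,W_i$ is a permutation times block unit-triangular matrices stored via their nonzero off-diagonal blocks, $P_t$ is a permutation and $D$ is block diagonal with blocks $X_{\mathcal{R}_i\mathcal{R}_i}$ (the pivot blocks) and one block on the DOFs remaining active at the end. $t_f$ counts the operations of this construction; $t_s$ the operations of applying $F$ or $F^{-1}=\big(\prod_i W_i^{-1}\big)P_tD^{-1}P_t^*\big(\prod_i V_i^{-1}\big)$ (with $D$ stored in factored form) to a vector; $m_f$ the storage of all these factors. *)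

theory Defs
  imports Complex_Main "HOL-Library.Cardinality"
begin

text \<open>DOFs are the indices 0..N-1. The tree is the uniform 2^d-ary tree with levels 1 (finest)
  to L (root); a box at level l is identified by its integer coordinate vector
  b :: 'd \<Rightarrow> int with 0 \<le> b j < 2^(L-l); lengths are measured in units of the box
  sidelength of that level. Each DOF is located (via its point x_i) in a leaf box leaf i.\<close>

type_synonym 'd box = "'d \<Rightarrow> int"

definition boxes :: "nat \<Rightarrow> nat \<Rightarrow> ('d::finite) box set" where
  "boxes L l = {b. \<forall>j. 0 \<le> b j \<and> b j < 2 ^ (L - l)}"

definition parent :: "('d::finite) box \<Rightarrow> 'd box" where
  "parent c = (\<lambda>j. c j div 2)"

text \<open>B_i: the DOFs of box b at level l at the time level l is processed: at level 1 all
  DOFs in the leaf, at higher levels the union of the skeletons of its children.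
  S l b is the skeleton set chosen by the ID for box b at level l.\<close>
definition actB :: "nat \<Rightarrow> (nat \<Rightarrow> ('d::finite) box) \<Rightarrow> (nat \<Rightarrow> 'd box \<Rightarrow> nat set)
    \<Rightarrow> nat \<Rightarrow> 'd box \<Rightarrow> nat set" where
  "actB N leaf S l b =
     (if l \<le> 1 then {i. i < N \<and> leaf i = b}
      else \<Union> {S (l - 1) c | c. parent c = b})"

definition adjacent :: "('d::finite) box \<Rightarrow> 'd box \<Rightarrow> bool" where
  "adjacent b c \<longleftrightarrow> b \<noteq> c \<and> (\<forall>j. \<bar>b j - c j\<bar> \<le> 1)"

text \<open>Box c is not entirely outside the proxy circle/sphere of radius 5/2 (sidelengths)
  centred at the centre of box b: the distance from the centre of b to the closed box c is
  at most 5/2.\<close>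
definition proxy_near :: "('d::finite) box \<Rightarrow> 'd box \<Rightarrow> bool" where
  "proxy_near b c \<longleftrightarrow>
     (\<Sum>j\<in>UNIV. (max (real_of_int \<bar>b j - c j\<bar> - 1/2) 0)\<^sup>2) \<le> (5/2)\<^sup>2"

text \<open>Boxes at each level are processed in the order given by ord l (smaller first).
  When box b is processed, a same-level box c that was already processed only has its
  skeleton active, otherwise all of B_c.\<close>
definition seen :: "nat \<Rightarrow> (nat \<Rightarrow> ('d::finite) box) \<Rightarrow> (nat \<Rightarrow> 'd box \<Rightarrow> nat set)
    \<Rightarrow> (nat \<Rightarrow> 'd box \<Rightarrow> nat) \<Rightarrow> nat \<Rightarrow> 'd box \<Rightarrow> 'd box \<Rightarrow> nat set" where
  "seen N leaf S ord l b c = (if ord l c < ord l b then S l c else actB N leaf S l c)"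

definition Nset :: "nat \<Rightarrow> (nat \<Rightarrow> ('d::finite) box) \<Rightarrow> (nat \<Rightarrow> 'd box \<Rightarrow> nat set)
    \<Rightarrow> (nat \<Rightarrow> 'd box \<Rightarrow> nat) \<Rightarrow> nat \<Rightarrow> nat \<Rightarrow> 'd box \<Rightarrow> nat set" where
  "Nset N leaf S ord L l b =
     \<Union> {seen N leaf S ord l b c | c. c \<in> boxes L l \<and> adjacent b c}"

definition Oset :: "nat \<Rightarrow> (nat \<Rightarrow> ('d::finite) box) \<Rightarrow> (nat \<Rightarrow> 'd box \<Rightarrow> nat set)
    \<Rightarrow> (nat \<Rightarrow> 'd box \<Rightarrow> nat) \<Rightarrow> nat \<Rightarrow> nat \<Rightarrow> 'd box \<Rightarrow> nat set" where
  "Oset N leaf S ord L l b =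
     \<Union> {seen N leaf S ord l b c | c. c \<in> boxes L l \<and> c \<noteq> b \<and> \<not> adjacent b c
                                     \<and> proxy_near b c}"

text \<open>Operation count for processing box b at level l:
  ID of a (2|O|+2 n_p) x |B| matrix: (2|O|+2 n_p)|B|^2;
  block row and column operations with T (|S| x |R|) on the rows/columns of B \<union> N:
  2 |R||S|(|B|+|N|);
  block Gaussian elimination with pivot set R and updated set S \<union> N:
  |R|^3 + |R||S \<union> N|^2.\<close>
definition box_tf :: "nat \<Rightarrow> nat \<Rightarrow> (nat \<Rightarrow> ('d::finite) box) \<Rightarrow> (nat \<Rightarrow> 'd box \<Rightarrow> nat set)
    \<Rightarrow> (nat \<Rightarrow> 'd box \<Rightarrow> nat) \<Rightarrow> nat \<Rightarrow> nat \<Rightarrow> 'd box \<Rightarrow> nat" where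
  "box_tf np N leaf S ord L l b =
     (let Bs = actB N leaf S l b; Ss = S l b; Rs = Bs - Ss;
          nB = card Bs; s = card Ss; r = card Rs;
          n = card (Nset N leaf S ord L l b); nO = card (Oset N leaf S ord L l b)
      in (2 * nO + 2 * np) * nB ^ 2 + 2 * r * s * (nB + n)
         + r ^ 3 + r * card (Ss \<union> Nset N leaf S ord L l b) ^ 2)"

text \<open>Storage (= application cost) of the factors produced by box b at level l:
  the local permutation (|B|), the T blocks in V_i and W_i (2|S||R|), the off-diagonal
  elimination blocks in V_i and W_i (2|R||S \<union> N|), and the factored pivot block (|R|^2).\<close>
definition box_store :: "nat \<Rightarrow> (nat \<Rightarrow> ('d::finite) box) \<Rightarrow> (nat \<Rightarrow> 'd box \<Rightarrow> nat set)
    \<Rightarrow> (nat \<Rightarrow> 'd box \<Rightarrow> nat) \<Rightarrow> nat \<Rightarrow> nat \<Rightarrow> 'd box \<Rightarrow> nat" where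
  "box_store N leaf S ord L l b =
     (let Bs = actB N leaf S l b; Ss = S l b; Rs = Bs - Ss;
          r = card Rs; s = card Ss
      in card Bs + 2 * s * r + 2 * r * card (Ss \<union> Nset N leaf S ord L l b) + r ^ 2)"

text \<open>DOFs remaining active after levels 1..L-2 have been processed.\<close>
definition final_set :: "nat \<Rightarrow> (nat \<Rightarrow> ('d::finite) box \<Rightarrow> nat set) \<Rightarrow> nat \<Rightarrow> nat set" where
  "final_set N S L =
     (if 3 \<le> L then \<Union> {S (L - 2) b | b. b \<in> boxes L (L - 2)}
      else {i. i < N})"

text \<open>t_f: construction cost (all boxes, plus dense factorization of the final block).\<close>
definition t_f :: "nat \<Rightarrow> nat \<Rightarrow> (nat \<Rightarrow> ('d::finite) box) \<Rightarrow> (nat \<Rightarrow> 'd box \<Rightarrow> nat set)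
    \<Rightarrow> (nat \<Rightarrow> 'd box \<Rightarrow> nat) \<Rightarrow> nat \<Rightarrow> nat" where
  "t_f np N leaf S ord L =
     (\<Sum>l\<in>{1..L-2}. \<Sum>b\<in>boxes L l. box_tf np N leaf S ord L l b)
     + card (final_set N S L) ^ 3"

text \<open>t_s: cost of applying F or F^{-1} (global permutation P_t, all stored blocks,
  factored final block).\<close>
definition t_s :: "nat \<Rightarrow> (nat \<Rightarrow> ('d::finite) box) \<Rightarrow> (nat \<Rightarrow> 'd box \<Rightarrow> nat set)
    \<Rightarrow> (nat \<Rightarrow> 'd box \<Rightarrow> nat) \<Rightarrow> nat \<Rightarrow> nat" where
  "t_s N leaf S ord L =
     N + (\<Sum>l\<in>{1..L-2}. \<Sum>b\<in>boxes L l. box_store N leaf S ord L l b)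
     + card (final_set N S L) ^ 2"

text \<open>m_f: storage of all factors (permutation P_t, stored blocks, factored final block).\<close>
definition m_f :: "nat \<Rightarrow> (nat \<Rightarrow> ('d::finite) box) \<Rightarrow> (nat \<Rightarrow> 'd box \<Rightarrow> nat set)
    \<Rightarrow> (nat \<Rightarrow> 'd box \<Rightarrow> nat) \<Rightarrow> nat \<Rightarrow> nat" where
  "m_f N leaf S ord L =
     N + (\<Sum>l\<in>{1..L-2}. \<Sum>b\<in>boxes L l. box_store N leaf S ord L l b)
     + card (final_set N S L) ^ 2"

definition kmax :: "(nat \<Rightarrow> ('d::finite) box \<Rightarrow> nat set) \<Rightarrow> nat \<Rightarrow> nat \<Rightarrow> nat" where
  "kmax S L l = Max ((\<lambda>b. card (S l b)) ` (boxes L l :: 'd box set))"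

definition valid_run :: "nat \<Rightarrow> nat \<Rightarrow> nat \<Rightarrow> (nat \<Rightarrow> ('d::finite) box)
    \<Rightarrow> (nat \<Rightarrow> 'd box \<Rightarrow> nat set) \<Rightarrow> (nat \<Rightarrow> 'd box \<Rightarrow> nat) \<Rightarrow> bool" where
  "valid_run c N L leaf S ord \<longleftrightarrow>
     1 \<le> L \<and>
     (\<forall>i<N. leaf i \<in> boxes L 1) \<and>
     (\<forall>b. card {i. i < N \<and> leaf i = b} \<le> c) \<and>
     (\<forall>l\<in>{1..L-2}. \<forall>b. S l b \<subseteq> actB N leaf S l b) \<and>
     (\<forall>l. inj_on (ord l) (boxes L l))"

end

theory Submission
  imports Defs "HOL-Library.FuncSet"
begin

lemma cube_PiE:
  "{c::('d::finite) box. \<forall>j. c j \<in> F j} = Pi\<^sub>E UNIV F"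
  by (auto simp: PiE_UNIV_domain Pi_def)

lemma card_cube:
  "card {c::('d::finite) box. \<forall>j. c j \<in> F j} = (\<Prod>j\<in>UNIV. card (F j))"
  by (simp add: cube_PiE card_PiE)

lemma finite_cube:
  assumes "\<And>j. finite (F j)"
  shows "finite {c::('d::finite) box. \<forall>j. c j \<in> F j}"
  unfolding cube_PiE using assms by (intro finite_PiE) auto

lemma boxes_cube: "boxes L l = {c::('d::finite) box. \<forall>j. c j \<in> {0..<2^(L-l)}}"
  by (auto simp: boxes_def)

lemma finite_boxes: "finite (boxes L l :: ('d::finite) box set)"
  unfolding boxes_cube by (rule finite_cube) auto

lemma card_boxes: "card (boxes L l :: ('d::finite) box set) = 2 ^ (CARD('d) * (L - l))"
proof -
  have "card (boxes L l :: 'd box set) = (\<Prod>j\<in>(UNIV::'d set). card {0..<(2::int)^(L-l)})"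
    unfolding boxes_cube card_cube by simp
  also have "\<dots> = (2 ^ (L - l)) ^ CARD('d)" by (simp add: nat_power_eq)
  finally show ?thesis by (simp add: power_mult[symmetric] mult.commute)
qed

lemma boxes_ne: "boxes L l \<noteq> {}"
  by (auto simp: boxes_def intro!: exI[of _ "\<lambda>_. 0"])

definition Q :: "('d::finite) box \<Rightarrow> 'd box set" where
  "Q b = {c. \<forall>j. c j \<in> {b j - 3 .. b j + 3}}"

lemma finite_Q: "finite (Q b)"
  unfolding Q_def by (rule finite_cube) auto

lemma card_Q: "card (Q (b::('d::finite) box)) = 7 ^ CARD('d)"
  unfolding Q_def card_cube by simp

lemma adjacent_Q: assumes "adjacent b c" shows "c \<in> Q b"
proof -
  { fix j have "\<bar>b j - c j\<bar> \<le> 1" using assms by (auto simp: adjacent_def)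
    hence "c j \<in> {b j - 3 .. b j + 3}" by auto }
  thus ?thesis by (auto simp: Q_def)
qed

lemma proxy_Q: assumes "proxy_near b c" shows "c \<in> Q b"
proof -
  { fix j
    let ?t = "max (real_of_int \<bar>b j - c j\<bar> - 1/2) 0"
    have "?t\<^sup>2 \<le> (\<Sum>j\<in>UNIV. (max (real_of_int \<bar>b j - c j\<bar> - 1/2) 0)\<^sup>2)"
      by (rule member_le_sum) auto
    also have "\<dots> \<le> (5/2)\<^sup>2" using assms by (simp add: proxy_near_def)
    finally have "?t \<le> 5/2" by (rule power2_le_imp_le) simp
    hence "real_of_int \<bar>b j - c j\<bar> \<le> 3" by (simp add: max_def split: if_splits)
    hence "\<bar>b j - c j\<bar> \<le> 3" by linarith
    hence "c j \<in> {b j - 3 .. b j + 3}" by auto }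
  thus ?thesis by (auto simp: Q_def)
qed

definition children :: "('d::finite) box \<Rightarrow> 'd box set" where
  "children b = {c. \<forall>j. c j \<in> {2 * b j, 2 * b j + 1}}"

lemma children_eq: "{c. parent c = b} = children b"
proof -
  have "\<And>x y::int. (x div 2 = y) = (x \<in> {2*y, 2*y+1})" by auto
  thus ?thesis unfolding children_def parent_def by (auto simp: fun_eq_iff)
qed

lemma finite_children: "finite (children b)"
  unfolding children_def by (rule finite_cube) auto

lemma card_children: "card (children (b::('d::finite) box)) = 2 ^ CARD('d)"
  unfolding children_def card_cube by (simp add: numeral_2_eq_2)

lemma children_boxes:
  assumes "b \<in> boxes L l" "1 \<le> l" "l \<le> L"
  shows "children b \<subseteq> boxes L (l - 1)"
proof
  fix c assume c: "c \<in> children b"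
  have e: "L - (l - 1) = Suc (L - l)" using assms by simp
  { fix j have "c j \<in> {2 * b j, 2 * b j + 1}" using c by (auto simp: children_def)
    moreover have "0 \<le> b j" "b j < 2 ^ (L - l)" using assms(1) by (auto simp: boxes_def)
    ultimately have "0 \<le> c j \<and> c j < 2 ^ Suc (L - l)" by auto }
  thus "c \<in> boxes L (l - 1)" unfolding boxes_def e by auto
qed



lemma arith_tf:
  fixes r s u n nB nO np T :: nat
  assumes "r \<le> nB" "s \<le> nB" "u \<le> s + n" "nB + n \<le> T" "nO + np \<le> T"
  shows "(2*nO+2*np)*nB^2 + 2*r*s*(nB+n) + r^3 + r*u^2 \<le> 6*nB*T^2"
proof -
  have nT: "nB \<le> T" "s \<le> T" "u \<le> T" "nB + n \<le> T" using assms by auto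
  have 1: "(2*nO+2*np)*nB^2 \<le> (2*T)*(nB*T)"
    by (rule mult_le_mono) (use assms nT in \<open>auto simp: power2_eq_square\<close>)
  have 2: "2*r*s*(nB+n) \<le> 2*nB*T*T"
    using assms nT by (intro mult_le_mono) auto
  have 3: "r^3 \<le> nB*T*T"
    using assms nT by (simp add: power3_eq_cube mult_le_mono)
  have 4: "r*(u*u) \<le> nB*(T*T)"
    using assms nT by (intro mult_le_mono) auto
  show ?thesis using 1 2 3 4 by (simp add: mult.assoc power2_eq_square algebra_simps)
qed

lemma arith_store:
  fixes r s u n nB :: nat
  assumes "r \<le> nB" "s \<le> nB" "u \<le> s + n"
  shows "nB + 2*s*r + 2*r*u + r^2 \<le> nB*(1 + 5*(nB+n))"
proof -
  have a: "s*r \<le> (nB+n)*nB" using assms by (intro mult_le_mono) auto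
  have b: "r*u \<le> nB*(nB+n)" using assms by (intro mult_le_mono) auto
  have c: "r^2 \<le> nB*(nB+n)" using assms by (simp add: power2_eq_square mult_le_mono)
  show ?thesis using a b c by (simp add: algebra_simps)
qed

lemma sum_le_cm: "(\<And>i. i\<in>A \<Longrightarrow> f i \<le> (K::nat)) \<Longrightarrow> sum f A \<le> card A * K"
  using sum_bounded_above[of A f K] by simp

lemma kpoly: "(k::nat)*(\<alpha>*k+p)^2 \<le> (\<alpha>+p)^2 * k^3"
proof (cases "k = 0")
  case False
  hence "\<alpha>*k+p \<le> (\<alpha>+p)*k" by (simp add: algebra_simps)
  hence "(\<alpha>*k+p)^2 \<le> ((\<alpha>+p)*k)^2" by (rule power_mono) simp
  hence "k*(\<alpha>*k+p)^2 \<le> k*((\<alpha>+p)*k)^2" by simp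
  thus ?thesis by (simp add: power2_eq_square power3_eq_cube algebra_simps)
qed simp

lemma kpoly2: "(k::nat)*(\<alpha>*k+1) \<le> (\<alpha>+1) * k^2"
proof (cases "k = 0")
  case False
  hence "\<alpha>*k+1 \<le> (\<alpha>+1)*k" by (simp add: algebra_simps)
  hence "k*(\<alpha>*k+1) \<le> k*((\<alpha>+1)*k)" by (rule mult_le_mono2)
  thus ?thesis by (simp add: power2_eq_square algebra_simps)
qed simp



context
  fixes c N L :: nat and leaf :: "nat \<Rightarrow> ('d::finite) box" and S ord
  assumes vr: "valid_run c N L leaf S ord"
  and mon: "\<forall>l. 1 \<le> l \<and> l < L - 2 \<longrightarrow> kmax S L l \<le> kmax S L (Suc l)"
begin

lemma S_sub: "1 \<le> l \<Longrightarrow> l \<le> L - 2 \<Longrightarrow> S l b \<subseteq> actB N leaf S l b"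
  using vr by (auto simp: valid_run_def)

lemma act_sub: "1 \<le> l \<Longrightarrow> l \<le> L - 2 \<Longrightarrow> actB N leaf S l b \<subseteq> {..<N}"
proof (induction l arbitrary: b)
  case 0 thus ?case by simp
next
  case (Suc m)
  show ?case
  proof (cases "m = 0")
    case True thus ?thesis by (auto simp: actB_def)
  next
    case False
    have "S m b' \<subseteq> {..<N}" for b'
      using S_sub[of m b'] Suc.IH[of b'] False Suc.prems by auto
    thus ?thesis using False by (auto simp: actB_def)
  qed
qed

lemma fin_act: "1 \<le> l \<Longrightarrow> l \<le> L - 2 \<Longrightarrow> finite (actB N leaf S l b)"
  by (rule finite_subset[OF act_sub]) auto

lemma fin_S: "1 \<le> l \<Longrightarrow> l \<le> L - 2 \<Longrightarrow> finite (S l b)"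
  by (rule finite_subset[OF S_sub fin_act])

lemma card_S_act: "1 \<le> l \<Longrightarrow> l \<le> L - 2 \<Longrightarrow> card (S l b) \<le> card (actB N leaf S l b)"
  by (rule card_mono[OF fin_act S_sub])

lemma card_S_k: "b \<in> boxes L l \<Longrightarrow> card (S l b) \<le> kmax S L l"
  unfolding kmax_def by (rule Max_ge) (auto simp: finite_boxes)

lemma card_act1: "card (actB N leaf S 1 b) \<le> c"
  using vr by (simp add: actB_def valid_run_def)

lemma card_act2:
  assumes "2 \<le> l" "l \<le> L - 2" "b \<in> boxes L l"
  shows "card (actB N leaf S l b) \<le> 2 ^ CARD('d) * kmax S L l"
proof -
  have e: "actB N leaf S l b = (\<Union>b'\<in>children b. S (l - 1) b')"
  proof -
    have "actB N leaf S l b = \<Union> {S (l - 1) b' | b'. parent b' = b}"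
      using assms by (simp add: actB_def)
    also have "{S (l - 1) b' | b'. parent b' = b} = S (l - 1) ` {b'. parent b' = b}"
      by (rule setcompr_eq_image)
    finally show ?thesis by (simp add: children_eq)
  qed
  have "card (actB N leaf S l b) \<le> (\<Sum>b'\<in>children b. card (S (l - 1) b'))"
    unfolding e by (rule card_UN_le) (rule finite_children)
  also have "\<dots> \<le> card (children b) * kmax S L (l - 1)"
  proof (rule sum_le_cm)
    fix b' assume "b' \<in> children b"
    moreover have "children b \<subseteq> boxes L (l - 1)"
      by (rule children_boxes) (use assms in auto)
    ultimately have "b' \<in> boxes L (l - 1)" by blast
    thus "card (S (l - 1) b') \<le> kmax S L (l - 1)" by (rule card_S_k)
  qed
  also have "\<dots> \<le> 2 ^ CARD('d) * kmax S L l"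
  proof -
    have "1 \<le> l - 1 \<and> l - 1 < L - 2" using assms by auto
    hence "kmax S L (l - 1) \<le> kmax S L (Suc (l - 1))" using mon by blast
    hence "kmax S L (l - 1) \<le> kmax S L l" using assms by simp
    thus ?thesis by (simp add: card_children)
  qed
  finally show ?thesis .
qed

definition Mb :: "nat \<Rightarrow> nat" where
  "Mb l = (if l = 1 then c else 2 ^ CARD('d) * kmax S L l)"

lemma card_act_M:
  assumes "1 \<le> l" "l \<le> L - 2" "b \<in> boxes L l"
  shows "card (actB N leaf S l b) \<le> Mb l"
  using assms card_act1 card_act2[of l b] by (cases "l = 1") (auto simp: Mb_def)

lemma card_seen_M:
  assumes "1 \<le> l" "l \<le> L - 2" "b' \<in> boxes L l"
  shows "card (seen N leaf S ord l b b') \<le> Mb l"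
  using assms card_act_M[OF assms] card_S_act[of l b'] by (auto simp: seen_def)

lemma card_union_M:
  assumes "1 \<le> l" "l \<le> L - 2" "X \<subseteq> (\<Union>b'\<in>Q b \<inter> boxes L l. seen N leaf S ord l b b')"
  shows "card X \<le> 7 ^ CARD('d) * Mb l"
proof -
  have fin: "finite (\<Union>b'\<in>Q b \<inter> boxes L l. seen N leaf S ord l b b')"
    using assms(1,2) finite_Q fin_act fin_S by (auto simp: seen_def)
  have "card X \<le> card (\<Union>b'\<in>Q b \<inter> boxes L l. seen N leaf S ord l b b')"
    using card_mono[OF fin assms(3)] .
  also have "\<dots> \<le> (\<Sum>b'\<in>Q b \<inter> boxes L l. card (seen N leaf S ord l b b'))"
    by (rule card_UN_le) (simp add: finite_Q)
  also have "\<dots> \<le> card (Q b \<inter> boxes L l) * Mb l"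
    using card_seen_M assms by (intro sum_le_cm) auto
  also have "\<dots> \<le> 7 ^ CARD('d) * Mb l"
    using card_mono[OF finite_Q, of "Q b \<inter> boxes L l" b] card_Q[of b] by simp
  finally show ?thesis .
qed

lemma card_N:
  assumes "1 \<le> l" "l \<le> L - 2"
  shows "card (Nset N leaf S ord L l b) \<le> 7 ^ CARD('d) * Mb l"
proof (rule card_union_M[OF assms])
  show "Nset N leaf S ord L l b \<subseteq> (\<Union>b'\<in>Q b \<inter> boxes L l. seen N leaf S ord l b b')"
    unfolding Nset_def using adjacent_Q by fastforce
qed

lemma card_O:
  assumes "1 \<le> l" "l \<le> L - 2"
  shows "card (Oset N leaf S ord L l b) \<le> 7 ^ CARD('d) * Mb l"
proof (rule card_union_M[OF assms])
  show "Oset N leaf S ord L l b \<subseteq> (\<Union>b'\<in>Q b \<inter> boxes L l. seen N leaf S ord l b b')"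
    unfolding Oset_def using proxy_Q by fastforce
qed

lemma box_tf_bound:
  assumes "1 \<le> l" "l \<le> L - 2" "b \<in> boxes L l"
  shows "box_tf np N leaf S ord L l b \<le>
     6 * card (actB N leaf S l b) * ((1 + 7 ^ CARD('d)) * Mb l + np)^2"
proof -
  let ?B = "actB N leaf S l b" and ?n = "card (Nset N leaf S ord L l b)"
  let ?T = "card ?B + 7 ^ CARD('d) * Mb l + np"
  have fB: "finite ?B" using fin_act assms by auto
  have sB: "S l b \<subseteq> ?B" using S_sub assms by auto
  have "box_tf np N leaf S ord L l b \<le> 6 * card ?B * ?T ^ 2"
    unfolding box_tf_def Let_def
  proof (rule arith_tf)
    show "card (?B - S l b) \<le> card ?B" using fB by (simp add: card_mono)
    show "card (S l b) \<le> card ?B" using fB sB by (simp add: card_mono)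
    show "card (S l b \<union> Nset N leaf S ord L l b) \<le> card (S l b) + ?n" by (rule card_Un_le)
    have "?n \<le> 7 ^ CARD('d) * Mb l" using card_N assms by simp
    thus "card ?B + ?n \<le> ?T" by simp
    have "card (Oset N leaf S ord L l b) \<le> 7 ^ CARD('d) * Mb l" using card_O assms by simp
    thus "card (Oset N leaf S ord L l b) + np \<le> ?T" by simp
  qed
  also have "\<dots> \<le> 6 * card ?B * ((1 + 7 ^ CARD('d)) * Mb l + np)^2"
    using card_act_M assms by (intro mult_le_mono2 power_mono) (auto simp: algebra_simps)
  finally show ?thesis .
qed

lemma box_store_bound:
  assumes "1 \<le> l" "l \<le> L - 2" "b \<in> boxes L l"
  shows "box_store N leaf S ord L l b \<le>
     card (actB N leaf S l b) * (1 + 5 * ((1 + 7 ^ CARD('d)) * Mb l))"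
proof -
  let ?B = "actB N leaf S l b" and ?n = "card (Nset N leaf S ord L l b)"
  have fB: "finite ?B" using fin_act assms by auto
  have sB: "S l b \<subseteq> ?B" using S_sub assms by auto
  have "box_store N leaf S ord L l b \<le> card ?B * (1 + 5 * (card ?B + ?n))"
    unfolding box_store_def Let_def
  proof (rule arith_store)
    show "card (?B - S l b) \<le> card ?B" using fB by (simp add: card_mono)
    show "card (S l b) \<le> card ?B" using fB sB by (simp add: card_mono)
    show "card (S l b \<union> Nset N leaf S ord L l b) \<le> card (S l b) + ?n" by (rule card_Un_le)
  qed
  also have "\<dots> \<le> card ?B * (1 + 5 * ((1 + 7 ^ CARD('d)) * Mb l))"
    using card_act_M[OF assms] card_N[OF assms(1,2), of b]
    by (intro mult_le_mono2) (auto simp: algebra_simps)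
  finally show ?thesis .
qed

lemma level1_sum: "(\<Sum>b\<in>boxes L 1. card (actB N leaf S 1 b)) = N"
proof -
  have "(\<Sum>b\<in>boxes L 1. card (actB N leaf S 1 b)) = card (\<Union>b\<in>boxes L 1. actB N leaf S 1 b)"
    by (rule card_UN_disjoint[symmetric]) (auto simp: finite_boxes actB_def)
  also have "(\<Union>b\<in>boxes L 1. actB N leaf S 1 b) = {..<N}"
    using vr by (auto simp: actB_def valid_run_def)
  finally show ?thesis by simp
qed

lemma N_small: "L < 3 \<Longrightarrow> N \<le> 2 ^ CARD('d) * c"
proof -
  assume L: "L < 3"
  have "N = (\<Sum>b\<in>boxes L 1. card (actB N leaf S 1 b))" using level1_sum by simp
  also have "\<dots> \<le> card (boxes L 1 :: 'd box set) * c"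
    using card_act1 by (intro sum_le_cm) auto
  also have "card (boxes L 1 :: 'd box set) \<le> 2 ^ CARD('d)"
    unfolding card_boxes using L by (intro power_increasing) auto
  finally show ?thesis by simp
qed


lemma lev_tf:
  assumes "1 \<le> l" "l \<le> L - 2"
  shows "(\<Sum>b\<in>boxes L l. box_tf np N leaf S ord L l b) \<le>
    (if l = 1 then 6*((1+7^CARD('d))*c+np)^2 * N
     else 6*2^CARD('d)*((1+7^CARD('d))*2^CARD('d)+np)^2 * (2^(CARD('d)*(L-l)) * kmax S L l ^3))"
proof (cases "l = 1")
  case True
  hence l1: "l = 1" .
  have Mb1: "Mb l = c" using l1 by (simp add: Mb_def)
  let ?X = "6*((1+7^CARD('d))*c+np)^2"
  have "(\<Sum>b\<in>boxes L l. box_tf np N leaf S ord L l b)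
      \<le> (\<Sum>b\<in>boxes L l. ?X * card (actB N leaf S l b))"
  proof (rule sum_mono)
    fix b :: "'d box" assume "b \<in> boxes L l"
    have "box_tf np N leaf S ord L l b \<le> 6 * card (actB N leaf S l b) * ((1 + 7 ^ CARD('d)) * Mb l + np)^2"
      using box_tf_bound[OF assms \<open>b \<in> boxes L l\<close>] .
    also have "\<dots> = ?X * card (actB N leaf S l b)" unfolding Mb1 by (simp only: ac_simps)
    finally show "box_tf np N leaf S ord L l b \<le> ?X * card (actB N leaf S l b)" .
  qed
  also have "\<dots> = ?X * (\<Sum>b\<in>boxes L l. card (actB N leaf S l b))" by (simp add: sum_distrib_left)
  also have "(\<Sum>b\<in>boxes L l. card (actB N leaf S l b)) = N" unfolding l1 by (rule level1_sum)
  finally show ?thesis using l1 by simp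
next
  case False
  let ?k = "kmax S L l" and ?\<alpha> = "(1+7^CARD('d))*2^CARD('d)"
  have "box_tf np N leaf S ord L l b \<le> 6*2^CARD('d)*(?\<alpha>+np)^2 * ?k^3" if b: "b \<in> boxes L l" for b
  proof -
    have "box_tf np N leaf S ord L l b \<le> 6 * card (actB N leaf S l b) * ((1 + 7 ^ CARD('d)) * Mb l + np)^2"
      using box_tf_bound[OF assms b] .
    also have "\<dots> = 6 * card (actB N leaf S l b) * (?\<alpha> * ?k + np)^2"
      by (simp only: Mb_def if_not_P[OF False] mult.assoc)
    also have "\<dots> \<le> 6 * (2^CARD('d) * ?k) * (?\<alpha> * ?k + np)^2"
      using card_act2[of l b] assms False b by (intro mult_le_mono1 mult_le_mono2) auto
    also have "\<dots> = 6 * 2^CARD('d) * (?k * (?\<alpha> * ?k + np)^2)" by (simp add: mult.assoc)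
    also have "\<dots> \<le> 6 * 2^CARD('d) * ((?\<alpha>+np)^2 * ?k^3)" by (intro mult_le_mono2 kpoly)
    finally show ?thesis by (simp add: mult.assoc)
  qed
  hence "(\<Sum>b\<in>boxes L l. box_tf np N leaf S ord L l b) \<le> card (boxes L l :: 'd box set) * (6*2^CARD('d)*(?\<alpha>+np)^2 * ?k^3)"
    by (intro sum_le_cm)
  thus ?thesis using False by (simp add: card_boxes algebra_simps)
qed

lemma lev_store:
  assumes "1 \<le> l" "l \<le> L - 2"
  shows "(\<Sum>b\<in>boxes L l. box_store N leaf S ord L l b) \<le>
    (if l = 1 then (1+5*((1+7^CARD('d))*c)) * N
     else 2^CARD('d)*(5*(1+7^CARD('d))*2^CARD('d)+1) * (2^(CARD('d)*(L-l)) * kmax S L l ^2))"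
proof (cases "l = 1")
  case True
  hence l1: "l = 1" .
  have Mb1: "Mb l = c" using l1 by (simp add: Mb_def)
  let ?X = "1+5*((1+7^CARD('d))*c)"
  have "(\<Sum>b\<in>boxes L l. box_store N leaf S ord L l b)
      \<le> (\<Sum>b\<in>boxes L l. ?X * card (actB N leaf S l b))"
  proof (rule sum_mono)
    fix b :: "'d box" assume "b \<in> boxes L l"
    have "box_store N leaf S ord L l b \<le> card (actB N leaf S l b) * (1 + 5 * ((1 + 7 ^ CARD('d)) * Mb l))"
      using box_store_bound[OF assms \<open>b \<in> boxes L l\<close>] .
    also have "\<dots> = ?X * card (actB N leaf S l b)" unfolding Mb1 by (simp only: ac_simps)
    finally show "box_store N leaf S ord L l b \<le> ?X * card (actB N leaf S l b)" .
  qed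
  also have "\<dots> = ?X * (\<Sum>b\<in>boxes L l. card (actB N leaf S l b))" by (simp add: sum_distrib_left)
  also have "(\<Sum>b\<in>boxes L l. card (actB N leaf S l b)) = N" unfolding l1 by (rule level1_sum)
  finally show ?thesis using l1 by simp
next
  case False
  let ?k = "kmax S L l" and ?\<beta> = "5*(1+7^CARD('d))*2^CARD('d)"
  have "box_store N leaf S ord L l b \<le> 2^CARD('d)*(?\<beta>+1) * ?k^2" if b: "b \<in> boxes L l" for b
  proof -
    have "box_store N leaf S ord L l b \<le> card (actB N leaf S l b) * (1 + 5 * ((1 + 7 ^ CARD('d)) * Mb l))"
      using box_store_bound[OF assms b] .
    also have "\<dots> = card (actB N leaf S l b) * (?\<beta> * ?k + 1)"
      using False by (simp add: Mb_def algebra_simps)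
    also have "\<dots> \<le> (2^CARD('d) * ?k) * (?\<beta> * ?k + 1)"
      using card_act2[of l b] assms False b by (intro mult_le_mono1) auto
    also have "\<dots> = 2^CARD('d) * (?k * (?\<beta> * ?k + 1))" by (simp only: mult.assoc)
    also have "\<dots> \<le> 2^CARD('d) * ((?\<beta>+1) * ?k^2)" by (intro mult_le_mono2 kpoly2)
    finally show ?thesis by (simp only: mult.assoc)
  qed
  hence "(\<Sum>b\<in>boxes L l. box_store N leaf S ord L l b) \<le> card (boxes L l :: 'd box set) * (2^CARD('d)*(?\<beta>+1) * ?k^2)"
    by (intro sum_le_cm)
  thus ?thesis using False by (simp add: card_boxes algebra_simps)
qed

lemma card_final:
  assumes "3 \<le> L"
  shows "card (final_set N S L) \<le> 2^(CARD('d)*2) * kmax S L (L-2)"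
proof -
  have "final_set N S L = (\<Union>b\<in>boxes L (L-2). S (L-2) b)"
    using assms by (simp add: final_set_def setcompr_eq_image)
  hence "card (final_set N S L) \<le> (\<Sum>b\<in>(boxes L (L-2) :: 'd box set). card (S (L-2) b))"
    using card_UN_le[OF finite_boxes] by simp
  also have "\<dots> \<le> card (boxes L (L-2) :: 'd box set) * kmax S L (L-2)"
    using card_S_k by (intro sum_le_cm) auto
  also have "card (boxes L (L-2) :: 'd box set) = 2^(CARD('d)*2)"
    using assms by (simp add: card_boxes)
  finally show ?thesis .
qed

end

lemma sum_split:
  fixes f g :: "nat \<Rightarrow> nat"
  assumes "\<And>l. l \<in> {1..M} \<Longrightarrow> f l \<le> (if l = 1 then X else Y * g l)"
  shows "(\<Sum>l\<in>{1..M}. f l) \<le> X + Y * (\<Sum>l\<in>{1..M}. g l)"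
proof -
  have "(\<Sum>l\<in>{1..M}. f l) \<le> (\<Sum>l\<in>{1..M}. (if l = 1 then X else 0) + Y * g l)"
  proof (rule sum_mono)
    fix l assume "l \<in> {1..M}"
    from assms[OF this] show "f l \<le> (if l = 1 then X else 0) + Y * g l" by (cases "l = 1") auto
  qed
  also have "\<dots> = (if 1 \<in> {1..M} then X else 0) + Y * (\<Sum>l\<in>{1..M}. g l)"
    by (simp add: sum.distrib sum_distrib_left sum.delta)
  also have "\<dots> \<le> X + Y * (\<Sum>l\<in>{1..M}. g l)" by simp
  finally show ?thesis .
qed



lemma pow_id3: "((2::nat)^(d*2)*k)^3 = 2^(d*4) * (2^(d*2)*k^3)"
  by (simp add: power_mult_distrib flip: power_mult power_add)

lemma pow_id2: "((2::nat)^(d*2)*k)^2 = 2^(d*2) * (2^(d*2)*k^2)"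
  by (simp add: power_mult_distrib flip: power_mult power_add)

lemma G_term:
  assumes "3 \<le> L"
  shows "2^(d*2) * f (L-2) \<le> (\<Sum>l\<in>{1..L-2}. (2::nat)^(d*(L-l)) * f l)"
proof -
  have "2^(d*(L-(L-2))) * f (L-2) \<le> (\<Sum>l\<in>{1..L-2}. (2::nat)^(d*(L-l)) * f l)"
    by (rule member_le_sum[where i="L-2"]) (use assms in auto)
  moreover have "L-(L-2) = 2" using assms by simp
  ultimately show ?thesis by simp
qed

lemma tf_nat:
  fixes leaf :: "nat \<Rightarrow> ('d::finite) box"
  assumes vr: "valid_run c N L leaf S ord"
  and mon: "\<forall>l. 1 \<le> l \<and> l < L - 2 \<longrightarrow> kmax S L l \<le> kmax S L (Suc l)"
  shows "t_f np N leaf S ord L \<le>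
    (6*((1+7^CARD('d))*c+np)^2 + (2^CARD('d)*c)^2) * N
    + (6*2^CARD('d)*((1+7^CARD('d))*2^CARD('d)+np)^2 + 2^(CARD('d)*4))
      * (\<Sum>l\<in>{1..L-2}. 2^(CARD('d)*(L-l)) * kmax S L l^3)"
proof -
  let ?G = "\<Sum>l\<in>{1..L-2}. 2^(CARD('d)*(L-l)) * kmax S L l^3"
  let ?A1 = "6*((1+7^CARD('d))*c+np)^2"
  let ?A2 = "6*2^CARD('d)*((1+7^CARD('d))*2^CARD('d)+np)^2"
  have s: "(\<Sum>l\<in>{1..L-2}. \<Sum>b\<in>boxes L l. box_tf np N leaf S ord L l b) \<le> ?A1 * N + ?A2 * ?G"
    by (rule sum_split) (use lev_tf[OF vr mon] in auto)
  have f: "card (final_set N S L)^3 \<le> (2^CARD('d)*c)^2 * N + 2^(CARD('d)*4) * ?G"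
  proof (cases "3 \<le> L")
    case True
    have "card (final_set N S L)^3 \<le> (2^(CARD('d)*2) * kmax S L (L-2))^3"
      by (rule power_mono[OF card_final[OF vr mon True]]) simp
    also have "\<dots> = 2^(CARD('d)*4) * (2^(CARD('d)*2) * kmax S L (L-2)^3)" by (rule pow_id3)
    also have "\<dots> \<le> 2^(CARD('d)*4) * ?G"
      by (rule mult_le_mono2) (rule G_term[OF True, where f="\<lambda>l. kmax S L l^3"])
    finally show ?thesis by simp
  next
    case False
    hence fs: "final_set N S L = {i. i < N}" by (simp add: final_set_def)
    have Nb: "N \<le> 2^CARD('d)*c" using N_small[OF vr mon] False by simp
    have "card (final_set N S L)^3 = N*N*N" unfolding fs by (simp add: power3_eq_cube)
    also have "\<dots> \<le> (2^CARD('d)*c)*(2^CARD('d)*c)*N" using Nb by (intro mult_le_mono) auto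
    finally show ?thesis by (simp add: power2_eq_square)
  qed
  show ?thesis unfolding t_f_def using s f by (simp add: algebra_simps)
qed

lemma ts_nat:
  fixes leaf :: "nat \<Rightarrow> ('d::finite) box"
  assumes vr: "valid_run c N L leaf S ord"
  and mon: "\<forall>l. 1 \<le> l \<and> l < L - 2 \<longrightarrow> kmax S L l \<le> kmax S L (Suc l)"
  shows "t_s N leaf S ord L \<le>
    (1 + (1+5*((1+7^CARD('d))*c)) + 2^CARD('d)*c) * N
    + (2^CARD('d)*(5*(1+7^CARD('d))*2^CARD('d)+1) + 2^(CARD('d)*2))
      * (\<Sum>l\<in>{1..L-2}. 2^(CARD('d)*(L-l)) * kmax S L l^2)"
proof -
  let ?G = "\<Sum>l\<in>{1..L-2}. 2^(CARD('d)*(L-l)) * kmax S L l^2"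
  let ?A1 = "1+5*((1+7^CARD('d))*c)"
  let ?A2 = "2^CARD('d)*(5*(1+7^CARD('d))*2^CARD('d)+1)"
  have s: "(\<Sum>l\<in>{1..L-2}. \<Sum>b\<in>boxes L l. box_store N leaf S ord L l b) \<le> ?A1 * N + ?A2 * ?G"
    by (rule sum_split) (use lev_store[OF vr mon] in auto)
  have f: "card (final_set N S L)^2 \<le> (2^CARD('d)*c) * N + 2^(CARD('d)*2) * ?G"
  proof (cases "3 \<le> L")
    case True
    have "card (final_set N S L)^2 \<le> (2^(CARD('d)*2) * kmax S L (L-2))^2"
      by (rule power_mono[OF card_final[OF vr mon True]]) simp
    also have "\<dots> = 2^(CARD('d)*2) * (2^(CARD('d)*2) * kmax S L (L-2)^2)" by (rule pow_id2)
    also have "\<dots> \<le> 2^(CARD('d)*2) * ?G"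
      by (rule mult_le_mono2) (rule G_term[OF True, where f="\<lambda>l. kmax S L l^2"])
    finally show ?thesis by simp
  next
    case False
    hence fs: "final_set N S L = {i. i < N}" by (simp add: final_set_def)
    have Nb: "N \<le> 2^CARD('d)*c" using N_small[OF vr mon] False by simp
    have "card (final_set N S L)^2 = N*N" unfolding fs by (simp add: power2_eq_square)
    also have "\<dots> \<le> (2^CARD('d)*c)*N" using Nb by (intro mult_le_mono) auto
    finally show ?thesis by simp
  qed
  show ?thesis unfolding t_s_def using s f by (simp add: algebra_simps)
qed



lemma real_bound:
  fixes t K1 K2 N G :: nat and C :: real
  assumes "t \<le> K1*N + K2*G" "real K1 \<le> C" "real K2 \<le> C"
  shows "real t \<le> C * (real N + real G)"
proof -
  have "real t \<le> real K1 * real N + real K2 * real G"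
    using assms(1) by (metis of_nat_add of_nat_le_iff of_nat_mult)
  also have "\<dots> \<le> C * real N + C * real G"
    using assms by (intro add_mono mult_right_mono) auto
  finally show ?thesis by (simp add: algebra_simps)
qed

lemma real_G: "real (\<Sum>l\<in>{1..L-2}. 2^(d*(L-l)) * (k l::nat)^e) = (\<Sum>l\<in>{1..L-2}. 2^(d*(L-l)) * real (k l)^e)"
  by (simp add: of_nat_sum)

theorem theorem3p3:
  assumes "CARD('d) \<in> {2, 3}"
  shows "\<forall>(c::nat) (np::nat) (a::real). \<exists>C::real. C > 0 \<and>
    (\<forall>N L (leaf :: nat \<Rightarrow> ('d::finite) box) S ord.
       valid_run c N L leaf S ord
       \<and> real L \<le> a * ln (real N + 2)
       \<and> (\<forall>l. 1 \<le> l \<and> l < L - 2 \<longrightarrow> kmax S L l \<le> kmax S L (Suc l))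
       \<longrightarrow>
         real (t_f np N leaf S ord L)
           \<le> C * (real N + (\<Sum>l\<in>{1..L-2}. 2 ^ (CARD('d) * (L - l)) * real (kmax S L l) ^ 3))
       \<and> real (t_s N leaf S ord L)
           \<le> C * (real N + (\<Sum>l\<in>{1..L-2}. 2 ^ (CARD('d) * (L - l)) * real (kmax S L l) ^ 2))
       \<and> real (m_f N leaf S ord L) \<le> C * real (t_s N leaf S ord L))"
proof (intro allI)
  fix c np :: nat and a :: real
  define K1 :: nat where "K1 = 6*((1+7^CARD('d))*c+np)^2 + (2^CARD('d)*c)^2"
  define K2 :: nat where "K2 = 6*2^CARD('d)*((1+7^CARD('d))*2^CARD('d)+np)^2 + 2^(CARD('d)*4)"
  define K3 :: nat where "K3 = 1 + (1+5*((1+7^CARD('d))*c)) + 2^CARD('d)*c"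
  define K4 :: nat where "K4 = 2^CARD('d)*(5*(1+7^CARD('d))*2^CARD('d)+1) + 2^(CARD('d)*2)"
  define C :: real where "C = real K1 + real K2 + real K3 + real K4 + 1"
  show "\<exists>C::real. C > 0 \<and>
    (\<forall>N L (leaf :: nat \<Rightarrow> 'd box) S ord.
       valid_run c N L leaf S ord
       \<and> real L \<le> a * ln (real N + 2)
       \<and> (\<forall>l. 1 \<le> l \<and> l < L - 2 \<longrightarrow> kmax S L l \<le> kmax S L (Suc l))
       \<longrightarrow>
         real (t_f np N leaf S ord L)
           \<le> C * (real N + (\<Sum>l\<in>{1..L-2}. 2 ^ (CARD('d) * (L - l)) * real (kmax S L l) ^ 3))
       \<and> real (t_s N leaf S ord L)
           \<le> C * (real N + (\<Sum>l\<in>{1..L-2}. 2 ^ (CARD('d) * (L - l)) * real (kmax S L l) ^ 2))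
       \<and> real (m_f N leaf S ord L) \<le> C * real (t_s N leaf S ord L))"
  proof (intro exI conjI allI impI)
    show "C > 0" unfolding C_def by (simp add: add_nonneg_pos)
    fix N L and leaf :: "nat \<Rightarrow> 'd box" and S ord
    assume h: "valid_run c N L leaf S ord \<and> real L \<le> a * ln (real N + 2)
       \<and> (\<forall>l. 1 \<le> l \<and> l < L - 2 \<longrightarrow> kmax S L l \<le> kmax S L (Suc l))"
    hence vr: "valid_run c N L leaf S ord"
      and mon: "\<forall>l. 1 \<le> l \<and> l < L - 2 \<longrightarrow> kmax S L l \<le> kmax S L (Suc l)" by auto
    have "real (t_f np N leaf S ord L)
       \<le> C * (real N + real (\<Sum>l\<in>{1..L-2}. 2^(CARD('d)*(L-l)) * kmax S L l^3))"
      by (rule real_bound[OF tf_nat[OF vr mon, of np, folded K1_def K2_def]]) (auto simp: C_def)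
    thus "real (t_f np N leaf S ord L)
           \<le> C * (real N + (\<Sum>l\<in>{1..L-2}. 2 ^ (CARD('d) * (L - l)) * real (kmax S L l) ^ 3))"
      by (simp only: real_G)
    have "real (t_s N leaf S ord L)
       \<le> C * (real N + real (\<Sum>l\<in>{1..L-2}. 2^(CARD('d)*(L-l)) * kmax S L l^2))"
      by (rule real_bound[OF ts_nat[OF vr mon, folded K3_def K4_def]]) (auto simp: C_def)
    thus "real (t_s N leaf S ord L)
           \<le> C * (real N + (\<Sum>l\<in>{1..L-2}. 2 ^ (CARD('d) * (L - l)) * real (kmax S L l) ^ 2))"
      by (simp only: real_G)
    have "1 \<le> C" unfolding C_def by simp
    hence "1 * real (t_s N leaf S ord L) \<le> C * real (t_s N leaf S ord L)"
      by (intro mult_right_mono) auto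
    thus "real (m_f N leaf S ord L) \<le> C * real (t_s N leaf S ord L)"
      by (simp add: m_f_def t_s_def)
  qed
qed


end
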